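(* Let $V$ be a real vector space and $X$ a set of points lying on a line $\ell$ of $V$. The following are equivalent: (i) $Co(V,X)$ is topologically scattered (as a subspace of $\mathbf{2}^X$ with the product topology); (ii) $Co(V,X)$ is order-scattered; (iii) the semilattice of compact elements of $Co(V,X)$ is order-scattered; (iv) $X$ is order-scattered with respect to the linear order induced on $\ell$ (by identifying $\ell$ with the real line).
   Context: $Co(V,X)$ is the family of sets $C\cap X$ with $C$ convex in $V$, ordered by inclusion; its compact elements are the sets $\mathrm{conv}(F)\cap X$ with $F\subseteq X$ finite. A poset is order-scattered if it contains no copy of the chain $\mathbb{Q}$. A topological space is scattered if every non-empty subset has an isolated point in the induced topology; $\mathbf{2}^X\cong\mathcal{P}(X)$ carries the product topology of discrete two-point spaces. *)

theory Defs
  imports "HOL-Analysis.Analysis"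
begin

text \<open>Co(V,X): traces on X of convex subsets of the real vector space V (= the type 'v).\<close>
definition Co :: "'v::real_vector set \<Rightarrow> 'v set set" where
  "Co X = {C \<inter> X | C. convex C}"

text \<open>Compact elements of Co(V,X): conv(F) \<inter> X with F a finite subset of X.\<close>
definition Co_compact :: "'v::real_vector set \<Rightarrow> 'v set set" where
  "Co_compact X = {convex hull F \<inter> X | F. finite F \<and> F \<subseteq> X}"

definition order_scattered :: "'a::order set \<Rightarrow> bool" where
  "order_scattered P \<longleftrightarrow> \<not> (\<exists>f::rat \<Rightarrow> 'a. range f \<subseteq> P \<and> strict_mono f)"

definition scattered_space :: "'a topology \<Rightarrow> bool" where
  "scattered_space T \<longleftrightarrow>
     (\<forall>S. S \<subseteq> topspace T \<and> S \<noteq> {} \<longrightarrow>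
          (\<exists>x\<in>S. \<exists>U. openin T U \<and> U \<inter> S = {x}))"

definition char_on :: "'a set \<Rightarrow> 'a set \<Rightarrow> ('a \<Rightarrow> bool)" where
  "char_on X S = restrict (\<lambda>x. x \<in> S) X"

definition cantor_cube :: "'a set \<Rightarrow> ('a \<Rightarrow> bool) topology" where
  "cantor_cube X = product_topology (\<lambda>_. discrete_topology UNIV) X"

definition family_topology :: "'a set \<Rightarrow> 'a set set \<Rightarrow> ('a \<Rightarrow> bool) topology" where
  "family_topology X F = subtopology (cantor_cube X) (char_on X ` F)"

end

theory Submission
  imports Defs "HOL-Library.Countable_Set"
begin

definition emb_pick :: "('a \<Rightarrow> 'a \<Rightarrow> bool) \<Rightarrow> 'a \<Rightarrow> 'a \<Rightarrow> (nat \<Rightarrow> rat) \<Rightarrow> 'a list \<Rightarrow> 'a" where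
  "emb_pick R x0 y0 e xs = (SOME z. R x0 z \<and> R z y0 \<and>
      (\<forall>m<length xs. e m < e (length xs) \<longrightarrow> R (xs!m) z) \<and>
      (\<forall>m<length xs. e (length xs) < e m \<longrightarrow> R z (xs!m)))"

primrec emb_list :: "('a \<Rightarrow> 'a \<Rightarrow> bool) \<Rightarrow> 'a \<Rightarrow> 'a \<Rightarrow> (nat \<Rightarrow> rat) \<Rightarrow> nat \<Rightarrow> 'a list" where
  "emb_list R x0 y0 e 0 = []"
| "emb_list R x0 y0 e (Suc n) = emb_list R x0 y0 e n @ [emb_pick R x0 y0 e (emb_list R x0 y0 e n)]"

lemma emb_length: "length (emb_list R x0 y0 e n) = n"
  by (induct n) auto

definition emb_inv :: "('a \<Rightarrow> 'a \<Rightarrow> bool) \<Rightarrow> 'a \<Rightarrow> 'a \<Rightarrow> (nat \<Rightarrow> rat) \<Rightarrow> 'a list \<Rightarrow> bool" where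
  "emb_inv R x0 y0 e xs \<longleftrightarrow> (\<forall>i<length xs. R x0 (xs!i) \<and> R (xs!i) y0) \<and>
     (\<forall>i<length xs. \<forall>j<length xs. e i < e j \<longrightarrow> R (xs!i) (xs!j))"

lemma emb_pick_ex:
  assumes trans: "\<And>x y z. R x y \<Longrightarrow> R y z \<Longrightarrow> R x z"
    and interp: "\<And>x y. R x y \<Longrightarrow> \<exists>z. R x z \<and> R z y"
    and r0: "R x0 y0" and inj: "inj e" and inv: "emb_inv R x0 y0 e xs"
  shows "\<exists>z. R x0 z \<and> R z y0 \<and>
      (\<forall>m<length xs. e m < e (length xs) \<longrightarrow> R (xs!m) z) \<and>
      (\<forall>m<length xs. e (length xs) < e m \<longrightarrow> R z (xs!m))"
proof -
  define n where "n = length xs"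
  define IL where "IL = {m. m<n \<and> e m < e n}"
  define IU where "IU = {m. m<n \<and> e n < e m}"
  have finIL: "finite IL" and finIU: "finite IU" unfolding IL_def IU_def by auto
  from inv have inv1: "\<And>i. i<n \<Longrightarrow> R x0 (xs!i) \<and> R (xs!i) y0"
    and inv2: "\<And>i j. i<n \<Longrightarrow> j<n \<Longrightarrow> e i < e j \<Longrightarrow> R (xs!i) (xs!j)"
    unfolding emb_inv_def n_def by auto
  obtain l where l1: "l = x0 \<or> R x0 l" and l2: "\<forall>m\<in>IL. xs!m = l \<or> R (xs!m) l"
    and l3: "\<forall>m\<in>IU. R l (xs!m)" and l4: "R l y0"
  proof (cases "IL = {}")
    case True
    show ?thesis
      by (rule that[of x0]) (use True r0 inv1 in \<open>auto simp: IU_def\<close>)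
  next
    case False
    have "Max (e ` IL) \<in> e ` IL" using False finIL by simp
    then obtain mL where mL: "mL \<in> IL" "e mL = Max (e ` IL)" by auto
    have le: "\<And>m. m \<in> IL \<Longrightarrow> e m \<le> e mL" using mL finIL by simp
    show ?thesis
    proof (rule that[of "xs!mL"])
      show "xs ! mL = x0 \<or> R x0 (xs ! mL)" using inv1 mL by (auto simp: IL_def)
      show "R (xs!mL) y0" using inv1 mL by (auto simp: IL_def)
      show "\<forall>m\<in>IL. xs ! m = xs ! mL \<or> R (xs ! m) (xs ! mL)"
      proof
        fix m assume m: "m \<in> IL"
        show "xs ! m = xs ! mL \<or> R (xs ! m) (xs ! mL)"
        proof (cases "m = mL")
          case False
          then have "e m \<noteq> e mL" using inj by (auto dest: injD)
          then have "e m < e mL" using le[OF m] by simp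
          then show ?thesis using inv2 m mL by (auto simp: IL_def)
        qed simp
      qed
      show "\<forall>m\<in>IU. R (xs ! mL) (xs ! m)"
        using inv2 mL by (auto simp: IL_def IU_def)
    qed
  qed
  obtain u where u1: "u = y0 \<or> R u y0" and u2: "\<forall>m\<in>IU. xs!m = u \<or> R u (xs!m)"
    and u3: "R l u"
  proof (cases "IU = {}")
    case True
    show ?thesis by (rule that[of y0]) (use True l4 in auto)
  next
    case False
    have "Min (e ` IU) \<in> e ` IU" using False finIU by simp
    then obtain mU where mU: "mU \<in> IU" "e mU = Min (e ` IU)" by auto
    have le: "\<And>m. m \<in> IU \<Longrightarrow> e mU \<le> e m" using mU finIU by simp
    show ?thesis
    proof (rule that[of "xs!mU"])
      show "xs ! mU = y0 \<or> R (xs ! mU) y0" using inv1 mU by (auto simp: IU_def)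
      show "R l (xs!mU)" using l3 mU by auto
      show "\<forall>m\<in>IU. xs ! m = xs ! mU \<or> R (xs ! mU) (xs ! m)"
      proof
        fix m assume m: "m \<in> IU"
        show "xs ! m = xs ! mU \<or> R (xs ! mU) (xs ! m)"
        proof (cases "m = mU")
          case False
          then have "e m \<noteq> e mU" using inj by (auto dest: injD)
          then have "e mU < e m" using le[OF m] by simp
          then show ?thesis using inv2 m mU by (auto simp: IU_def)
        qed simp
      qed
    qed
  qed
  obtain z where z1: "R l z" and z2: "R z u" using interp[OF u3] by blast
  show ?thesis
  proof (intro exI conjI allI impI)
    show "R x0 z" using l1 z1 trans by blast
    show "R z y0" using u1 z2 trans by blast
    fix m
    show "R (xs ! m) z" if "m < length xs" "e m < e (length xs)"
    proof -
      have "m \<in> IL" using that by (simp add: IL_def n_def)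
      then have "xs!m = l \<or> R (xs ! m) l" using l2 by blast
      then show ?thesis using z1 trans by blast
    qed
    show "R z (xs ! m)" if "m < length xs" "e (length xs) < e m"
    proof -
      have "m \<in> IU" using that by (simp add: IU_def n_def)
      then have "xs!m = u \<or> R u (xs ! m)" using u2 by blast
      then show ?thesis using z2 trans by blast
    qed
  qed
qed

lemma emb_inv_step:
  assumes trans: "\<And>x y z. R x y \<Longrightarrow> R y z \<Longrightarrow> R x z"
    and interp: "\<And>x y. R x y \<Longrightarrow> \<exists>z. R x z \<and> R z y"
    and r0: "R x0 y0" and inj: "inj e" and inv: "emb_inv R x0 y0 e xs"
  shows "emb_inv R x0 y0 e (xs @ [emb_pick R x0 y0 e xs])"
proof -
  define z where "z = emb_pick R x0 y0 e xs"
  have z: "R x0 z \<and> R z y0 \<and>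
      (\<forall>m<length xs. e m < e (length xs) \<longrightarrow> R (xs!m) z) \<and>
      (\<forall>m<length xs. e (length xs) < e m \<longrightarrow> R z (xs!m))"
    unfolding z_def emb_pick_def by (rule someI_ex, rule emb_pick_ex[OF assms])
  show ?thesis
    using inv z unfolding emb_inv_def z_def[symmetric]
    by (auto simp: nth_append less_Suc_eq)
qed

lemma emb_list_inv:
  assumes trans: "\<And>x y z. R x y \<Longrightarrow> R y z \<Longrightarrow> R x z"
    and interp: "\<And>x y. R x y \<Longrightarrow> \<exists>z. R x z \<and> R z y"
    and r0: "R x0 y0" and inj: "inj e"
  shows "emb_inv R x0 y0 e (emb_list R x0 y0 e n)"
proof (induct n)
  case 0
  then show ?case by (simp add: emb_inv_def)
next
  case (Suc n)
  then show ?case using emb_inv_step[OF assms] by simp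
qed

lemma emb_list_nth:
  "i < n \<Longrightarrow> emb_list R x0 y0 e n ! i = emb_list R x0 y0 e (Suc i) ! i"
proof (induct n)
  case (Suc n)
  then show ?case by (cases "i = n") (auto simp: nth_append emb_length less_Suc_eq)
qed simp

lemma rat_embedding:
  fixes R :: "'a \<Rightarrow> 'a \<Rightarrow> bool"
  assumes trans: "\<And>x y z. R x y \<Longrightarrow> R y z \<Longrightarrow> R x z"
    and interp: "\<And>x y. R x y \<Longrightarrow> \<exists>z. R x z \<and> R z y"
    and r0: "R lo hi"
  shows "\<exists>f::rat \<Rightarrow> 'a. (\<forall>q q'. q < q' \<longrightarrow> R (f q) (f q')) \<and> (\<forall>q. R lo (f q) \<and> R (f q) hi)"
proof -
  define e :: "nat \<Rightarrow> rat" where "e = from_nat_into UNIV"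
  have "bij_betw e UNIV (UNIV::rat set)"
    unfolding e_def by (rule bij_betw_from_nat_into) (auto simp: infinite_UNIV_char_0)
  then have inj: "inj e" and surj: "surj e" by (auto simp: bij_betw_def)
  define v where "v n = emb_list R lo hi e (Suc n) ! n" for n
  define f where "f q = v (inv e q)" for q
  have I: "emb_inv R lo hi e (emb_list R lo hi e n)" for n
    by (rule emb_list_inv[OF trans interp r0 inj])
  have ei: "e (inv e q) = q" for q using surj by (simp add: surj_f_inv_f)
  show ?thesis
  proof (intro exI conjI allI impI)
    fix q q' :: rat assume "q < q'"
    define N where "N = Suc (max (inv e q) (inv e q'))"
    have "R (emb_list R lo hi e N ! inv e q) (emb_list R lo hi e N ! inv e q')"
      using I[of N] \<open>q < q'\<close> ei unfolding emb_inv_def N_def by (auto simp: emb_length)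
    moreover have "emb_list R lo hi e N ! inv e q = v (inv e q)"
      unfolding v_def by (rule emb_list_nth) (simp add: N_def)
    moreover have "emb_list R lo hi e N ! inv e q' = v (inv e q')"
      unfolding v_def by (rule emb_list_nth) (simp add: N_def)
    ultimately show "R (f q) (f q')"
      unfolding f_def by simp
  next
    fix q
    have "R lo (emb_list R lo hi e (Suc (inv e q)) ! inv e q) \<and> R (emb_list R lo hi e (Suc (inv e q)) ! inv e q) hi"
      using I[of "Suc (inv e q)"] unfolding emb_inv_def by (auto simp: emb_length)
    then show "R lo (f q)" "R (f q) hi" unfolding f_def v_def by auto
  qed
qed


definition pf :: "'a set set \<Rightarrow> bool" where
  "pf Q \<longleftrightarrow> (\<forall>A\<in>Q. \<forall>G. finite G \<longrightarrow> (\<exists>B\<in>Q. B \<noteq> A \<and> B \<inter> G = A \<inter> G))"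

definition iseg :: "'a::linorder set \<Rightarrow> 'a set \<Rightarrow> bool" where
  "iseg T K \<longleftrightarrow> K \<subseteq> T \<and> (\<forall>x\<in>K. \<forall>y\<in>T. y \<le> x \<longrightarrow> y \<in> K)"

definition tconv :: "'a::linorder set \<Rightarrow> 'a set \<Rightarrow> bool" where
  "tconv T A \<longleftrightarrow> A \<subseteq> T \<and> (\<forall>x\<in>A. \<forall>z\<in>A. \<forall>y\<in>T. x \<le> y \<and> y \<le> z \<longrightarrow> y \<in> A)"

definition lam :: "'a::linorder set \<Rightarrow> 'a set \<Rightarrow> 'a set" where
  "lam T A = {t\<in>T. \<forall>a\<in>A. t < a}"

definition rho :: "'a::linorder set \<Rightarrow> 'a set \<Rightarrow> 'a set" where
  "rho T A = {t\<in>T. \<forall>a\<in>A. a < t}"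

lemma not_pf: "\<not> pf Q \<Longrightarrow> \<exists>A\<in>Q. \<exists>G. finite G \<and> (\<forall>B\<in>Q. B \<noteq> A \<longrightarrow> B \<inter> G \<noteq> A \<inter> G)"
  unfolding pf_def by (simp only: not_all not_ex not_imp Ball_def Bex_def de_Morgan_conj) blast

lemma pfD: "pf Q \<Longrightarrow> A \<in> Q \<Longrightarrow> finite G \<Longrightarrow> \<exists>B\<in>Q. B \<noteq> A \<and> B \<inter> G = A \<inter> G"
  unfolding pf_def by blast

lemma init_embed:
  fixes T :: "'a::linorder set"
  assumes ne: "Q \<noteq> {}" and pfQ: "pf Q" and seg: "\<forall>K\<in>Q. iseg T K"
  shows "\<exists>f::rat \<Rightarrow> 'a. range f \<subseteq> T \<and> strict_mono f"
proof -
  define R where "R x y \<longleftrightarrow> x\<in>T \<and> y\<in>T \<and> x<y \<and> (\<exists>K\<in>Q. x\<in>K \<and> y\<notin>K)" for x y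
  have trans: "R x z" if "R x y" "R y z" for x y z
  proof -
    from that(2) obtain K where K: "K\<in>Q" "y\<in>K" "z\<notin>K" and "y < z" "z \<in> T" unfolding R_def by blast
    from that(1) have "x \<in> T" "x < y" unfolding R_def by auto
    then have "x \<in> K" using K seg unfolding iseg_def by auto
    then show ?thesis using K \<open>x\<in>T\<close> \<open>z\<in>T\<close> \<open>x<y\<close> \<open>y<z\<close> unfolding R_def by auto
  qed
  have interp: "\<exists>z. R x z \<and> R z y" if "R x y" for x y
  proof -
    from that obtain K where K: "K\<in>Q" "x\<in>K" "y\<notin>K" and xy: "x\<in>T" "y\<in>T" unfolding R_def by blast
    obtain K' where K': "K'\<in>Q" "K' \<noteq> K" "K' \<inter> {x,y} = K \<inter> {x,y}"
      using pfQ K(1) unfolding pf_def by (meson finite.emptyI finite_insert)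
    have xK': "x \<in> K'" "y \<notin> K'" using K K'(3) by auto
    have gen: "\<exists>z. R x z \<and> R z y" if "K1\<in>Q" "K2\<in>Q" "x\<in>K2" "y\<notin>K1" "w\<in>K1" "w\<notin>K2" for K1 K2 w
    proof -
      have s1: "iseg T K1" "iseg T K2" using seg that by auto
      have wT: "w \<in> T" using s1 that unfolding iseg_def by auto
      have "x < w"
      proof (rule ccontr)
        assume "\<not> x < w" then have "w \<le> x" by simp
        then have "w \<in> K2" using s1(2) \<open>x\<in>K2\<close> wT unfolding iseg_def by blast
        then show False using that by simp
      qed
      have "w < y"
      proof (rule ccontr)
        assume "\<not> w < y" then have "y \<le> w" by simp
        then have "y \<in> K1" using s1(1) \<open>w\<in>K1\<close> xy unfolding iseg_def by blast
        then show False using that by simp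
      qed
      show ?thesis unfolding R_def using that xy wT \<open>x<w\<close> \<open>w<y\<close> by blast
    qed
    from K'(2) obtain w where "w \<in> K \<and> w \<notin> K' \<or> w \<in> K' \<and> w \<notin> K" by blast
    then show ?thesis
    proof
      assume "w \<in> K \<and> w \<notin> K'" then show ?thesis using gen[of K K' w] K K' xK' by blast
    next
      assume "w \<in> K' \<and> w \<notin> K" then show ?thesis using gen[of K' K w] K K' xK' by blast
    qed
  qed
  have start: "\<exists>x0 y0. R x0 y0"
  proof -
    obtain K where K: "K \<in> Q" using ne by blast
    obtain K' where K': "K'\<in>Q" "K' \<noteq> K" using pfQ K unfolding pf_def by (meson finite.emptyI)
    obtain K1 K2 w where k12: "K1\<in>Q" "K2\<in>Q" "w\<in>K1" "w\<notin>K2"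
      using K K' by blast
    have wT: "w\<in>T" using seg k12 unfolding iseg_def by auto
    obtain K3 where K3: "K3\<in>Q" "K3 \<noteq> K2" "K3 \<inter> {w} = K2 \<inter> {w}"
      using pfQ k12(2) unfolding pf_def by (meson finite.emptyI finite_insert)
    obtain K4 x where K4: "K4 \<in> Q" "x \<in> K4" "w \<notin> K4"
    proof (cases "K2 = {}")
      case True
      then obtain x where "x \<in> K3" using K3 by blast
      then show ?thesis using that K3 k12 by blast
    next
      case False
      then obtain x where "x \<in> K2" by blast
      then show ?thesis using that k12 by blast
    qed
    have s4: "iseg T K4" using seg K4 by auto
    have xT: "x \<in> T" using s4 K4 unfolding iseg_def by auto
    have "x < w"
    proof (rule ccontr)
      assume "\<not> x < w" then have "w \<le> x" by simp
      then have "w \<in> K4" using s4 K4 wT unfolding iseg_def by blast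
      then show False using K4 by simp
    qed
    then show ?thesis unfolding R_def using K4 xT wT by blast
  qed
  then obtain x0 y0 where r0: "R x0 y0" by blast
  have ex: "\<exists>f::rat \<Rightarrow> 'a. (\<forall>q q'. q < q' \<longrightarrow> R (f q) (f q')) \<and> (\<forall>q. R x0 (f q) \<and> R (f q) y0)"
    by (rule rat_embedding) (use trans interp r0 in blast)+
  then obtain f :: "rat \<Rightarrow> 'a" where f1: "\<forall>q q'. q < q' \<longrightarrow> R (f q) (f q')" and f2: "\<forall>q. R x0 (f q) \<and> R (f q) y0"
    by blast
  show ?thesis
  proof (intro exI conjI)
    show "range f \<subseteq> T" using f2 unfolding R_def by auto
    show "strict_mono f" unfolding strict_mono_def using f1 unfolding R_def by auto
  qed
qed

lemma decomp:
  assumes "tconv T A" "A \<noteq> {}"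
  shows "A = T - lam T A - rho T A"
proof
  show "A \<subseteq> T - lam T A - rho T A" using assms unfolding tconv_def lam_def rho_def by auto
  show "T - lam T A - rho T A \<subseteq> A"
  proof
    fix t assume t: "t \<in> T - lam T A - rho T A"
    then obtain a a' where "a\<in>A" "a \<le> t" "a'\<in>A" "t \<le> a'" unfolding lam_def rho_def
      by (auto simp: not_less)
    then show "t \<in> A" using assms t unfolding tconv_def by blast
  qed
qed

lemma lam_iseg: "iseg T (lam T A)"
  unfolding iseg_def
proof (intro conjI ballI impI)
  show "lam T A \<subseteq> T" unfolding lam_def by auto
  fix x y assume "x \<in> lam T A" "y \<in> T" "y \<le> x"
  then have "x \<in> T" "\<forall>a\<in>A. x < a" unfolding lam_def by auto
  then have "\<forall>a\<in>A. y < a" using \<open>y \<le> x\<close> order_le_less_trans by blast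
  then show "y \<in> lam T A" unfolding lam_def using \<open>y \<in> T\<close> by blast
qed

lemma rho_iseg: "iseg T (T - rho T A)"
  unfolding iseg_def
proof (intro conjI ballI impI)
  show "T - rho T A \<subseteq> T" by auto
  fix x y assume "x \<in> T - rho T A" "y \<in> T" "y \<le> x"
  then obtain a where "a \<in> A" "x \<le> a" unfolding rho_def by (auto simp: not_less)
  then have "\<not> a < y" using \<open>y \<le> x\<close> by simp
  then show "y \<in> T - rho T A" unfolding rho_def using \<open>a \<in> A\<close> \<open>y \<in> T\<close> by blast
qed

lemma lam_local:
  assumes "tconv T B" "a0 \<in> B" "t \<in> T"
  shows "t \<in> lam T B \<longleftrightarrow> t < a0 \<and> t \<notin> B"
proof
  assume "t \<in> lam T B" then show "t < a0 \<and> t \<notin> B" using assms unfolding lam_def by auto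
next
  assume h: "t < a0 \<and> t \<notin> B"
  have "t < b" if "b \<in> B" for b
  proof (rule ccontr)
    assume "\<not> t < b" then have "b \<le> t" by simp
    then have "t \<in> B" using assms h that unfolding tconv_def by (meson less_imp_le)
    then show False using h by simp
  qed
  then show "t \<in> lam T B" using assms unfolding lam_def by auto
qed

lemma rho_local:
  assumes "tconv T B" "a0 \<in> B" "t \<in> T"
  shows "t \<in> rho T B \<longleftrightarrow> a0 < t \<and> t \<notin> B"
proof
  assume "t \<in> rho T B" then show "a0 < t \<and> t \<notin> B" using assms unfolding rho_def by auto
next
  assume h: "a0 < t \<and> t \<notin> B"
  have "b < t" if "b \<in> B" for b
  proof (rule ccontr)
    assume "\<not> b < t" then have "t \<le> b" by simp
    then have "t \<in> B" using assms h that unfolding tconv_def by (meson less_imp_le)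
    then show False using h by simp
  qed
  then show "t \<in> rho T B" using assms unfolding rho_def by auto
qed

lemma perfect_intervals:
  fixes T :: "'a::linorder set"
  assumes ne: "P \<noteq> {}" and pfP: "pf P" and cv: "\<forall>A\<in>P. tconv T A"
  shows "\<exists>f::rat \<Rightarrow> 'a. range f \<subseteq> T \<and> strict_mono f"
proof -
  define P0 where "P0 = P - {{}}"
  have cv0: "\<forall>A\<in>P0. tconv T A" using cv P0_def by auto
  have pf0: "pf P0"
    unfolding pf_def
  proof (intro ballI allI impI)
    fix A G assume A: "A \<in> P0" and G: "finite (G::'a set)"
    then obtain a where a: "a \<in> A" unfolding P0_def by auto
    obtain B where B: "B\<in>P" "B \<noteq> A" "B \<inter> insert a G = A \<inter> insert a G"
      using pfP A G unfolding pf_def P0_def by (meson DiffD1 finite_insert)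
    then have "a \<in> B" using a by auto
    then show "\<exists>B\<in>P0. B \<noteq> A \<and> B \<inter> G = A \<inter> G" using B unfolding P0_def by blast
  qed
  have ne0: "P0 \<noteq> {}"
  proof -
    obtain A where A: "A \<in> P" using ne by blast
    obtain B where B: "B \<in> P" "B \<noteq> A" using pfP A unfolding pf_def by (meson finite.emptyI)
    show ?thesis using A B unfolding P0_def by blast
  qed
  show ?thesis
  proof (cases "pf (lam T ` P0)")
    case True
    have n: "lam T ` P0 \<noteq> {}" using ne0 by simp
    have s: "\<forall>K\<in>lam T ` P0. iseg T K" using lam_iseg by blast
    show ?thesis by (rule init_embed[OF n True s])
  next
    case False
    obtain L G0 where L: "L \<in> lam T ` P0" and G0: "finite G0"
      and iso0: "\<forall>B\<in>lam T ` P0. B \<noteq> L \<longrightarrow> B \<inter> G0 \<noteq> L \<inter> G0"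
      using not_pf[OF False] by blast
    then obtain A0 where A0: "A0 \<in> P0" and LA: "L = lam T A0" by blast
    have iso: "\<forall>B\<in>P0. lam T B \<noteq> lam T A0 \<longrightarrow> lam T B \<inter> G0 \<noteq> lam T A0 \<inter> G0"
      using iso0 LA by simp
    obtain a0 where a0: "a0 \<in> A0" using A0 unfolding P0_def by auto
    define H where "H = insert a0 G0"
    define P1 where "P1 = {B\<in>P0. B \<inter> H = A0 \<inter> H}"
    have a0B: "a0 \<in> B" if "B \<in> P1" for B using that a0 unfolding P1_def H_def by auto
    have lamc: "lam T B = lam T A0" if B: "B \<in> P1" for B
    proof -
      have "lam T B \<inter> G0 = lam T A0 \<inter> G0"
      proof (intro set_eqI iffI)
        fix t assume t: "t \<in> lam T B \<inter> G0"
        then have tT: "t \<in> T" unfolding lam_def by auto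
        have "t < a0 \<and> t \<notin> B" using lam_local[of T B a0 t] cv0 B a0B tT t unfolding P1_def by auto
        moreover have "t \<notin> A0" using calculation B t unfolding P1_def H_def by auto
        ultimately show "t \<in> lam T A0 \<inter> G0" using lam_local[of T A0 a0 t] cv0 A0 a0 tT t by auto
      next
        fix t assume t: "t \<in> lam T A0 \<inter> G0"
        then have tT: "t \<in> T" unfolding lam_def by auto
        have "t < a0 \<and> t \<notin> A0" using lam_local[of T A0 a0 t] cv0 A0 a0 tT t by auto
        moreover have "t \<notin> B" using calculation B t unfolding P1_def H_def by auto
        ultimately show "t \<in> lam T B \<inter> G0"
          using lam_local[of T B a0 t] cv0 B a0B tT t unfolding P1_def by auto
      qed
      moreover have "B \<in> P0" using B unfolding P1_def by simp
      ultimately show ?thesis using iso by metis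
    qed
    have pf1: "pf P1"
      unfolding pf_def
    proof (intro ballI allI impI)
      fix B G assume B: "B \<in> P1" and G: "finite (G::'a set)"
      have BP0: "B \<in> P0" and BH: "B \<inter> H = A0 \<inter> H" using B unfolding P1_def by auto
      have fGH: "finite (G \<union> H)" using G G0 unfolding H_def by simp
      obtain B' where B': "B'\<in>P0" "B' \<noteq> B" "B' \<inter> (G \<union> H) = B \<inter> (G \<union> H)"
        using pfD[OF pf0 BP0 fGH] by blast
      have "B' \<inter> H = B \<inter> H" "B' \<inter> G = B \<inter> G" using B'(3) by auto
      then have "B' \<in> P1" "B' \<inter> G = B \<inter> G" using BH B'(1) unfolding P1_def by auto
      then show "\<exists>B'\<in>P1. B' \<noteq> B \<and> B' \<inter> G = B \<inter> G" using B'(2) by blast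
    qed
    have A0P1: "A0 \<in> P1" using A0 unfolding P1_def by auto
    define Psi where "Psi = (\<lambda>B. T - rho T B) ` P1"
    have pfPsi: "pf Psi"
      unfolding pf_def
    proof (intro ballI allI impI)
      fix K G assume K: "K \<in> Psi" and G: "finite (G::'a set)"
      then obtain B where B: "B \<in> P1" "K = T - rho T B" unfolding Psi_def by auto
      have fG: "finite (insert a0 G)" using G by simp
      obtain B' where B': "B'\<in>P1" "B' \<noteq> B" "B' \<inter> insert a0 G = B \<inter> insert a0 G"
        using pfD[OF pf1 B(1) fG] by blast
      have cB: "tconv T B" "tconv T B'" using cv0 B B' unfolding P1_def by auto
      have eqG: "(T - rho T B') \<inter> G = (T - rho T B) \<inter> G"
      proof (intro set_eqI)
        fix t
        show "t \<in> (T - rho T B') \<inter> G \<longleftrightarrow> t \<in> (T - rho T B) \<inter> G"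
        proof (cases "t \<in> T \<and> t \<in> G")
          case True
          then have "t \<in> B' \<longleftrightarrow> t \<in> B" using B'(3) by auto
          then show ?thesis using rho_local[OF cB(1) a0B[OF B(1)], of t] rho_local[OF cB(2) a0B[OF B'(1)], of t] True
            by auto
        qed auto
      qed
      have neq: "T - rho T B' \<noteq> T - rho T B"
      proof
        assume h: "T - rho T B' = T - rho T B"
        have "rho T B' = rho T B"
        proof -
          have "rho T B' \<subseteq> T" "rho T B \<subseteq> T" unfolding rho_def by auto
          then show ?thesis using h by blast
        qed
        moreover have "lam T B' = lam T B" using lamc B(1) B'(1) by simp
        moreover have "B \<noteq> {}" "B' \<noteq> {}" using B(1) B'(1) unfolding P1_def P0_def by auto
        ultimately have "B' = B" using decomp[OF cB(1)] decomp[OF cB(2)] by metis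
        then show False using B' by simp
      qed
      have mem: "T - rho T B' \<in> Psi" using B'(1) unfolding Psi_def by simp
      show "\<exists>K'\<in>Psi. K' \<noteq> K \<and> K' \<inter> G = K \<inter> G"
        by (rule bexI[OF _ mem]) (simp only: B(2) neq eqG simp_thms)
    qed
    have n: "Psi \<noteq> {}" using A0P1 unfolding Psi_def by blast
    have sg: "\<forall>K\<in>Psi. iseg T K" unfolding Psi_def using rho_iseg by blast
    show ?thesis by (rule init_embed[OF n pfPsi sg])
  qed
qed


lemma line_comb:
  fixes a d :: "'v::real_vector"
  shows "(1 - u) *\<^sub>R (a + p *\<^sub>R d) + u *\<^sub>R (a + s *\<^sub>R d) = a + ((1 - u) * p + u * s) *\<^sub>R d"
  by (simp add: algebra_simps)

lemma line_inj:
  fixes a d :: "'v::real_vector"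
  assumes "d \<noteq> 0" "a + t *\<^sub>R d = a + s *\<^sub>R d"
  shows "t = s"
  using assms by simp

lemma seg_line:
  fixes a d :: "'v::real_vector"
  assumes d: "d \<noteq> 0" and ps: "p \<le> s"
  shows "a + t *\<^sub>R d \<in> closed_segment (a + p *\<^sub>R d) (a + s *\<^sub>R d) \<longleftrightarrow> p \<le> t \<and> t \<le> s"
proof
  assume "a + t *\<^sub>R d \<in> closed_segment (a + p *\<^sub>R d) (a + s *\<^sub>R d)"
  then obtain u where u: "0 \<le> u" "u \<le> 1" "a + t *\<^sub>R d = (1 - u) *\<^sub>R (a + p *\<^sub>R d) + u *\<^sub>R (a + s *\<^sub>R d)"
    unfolding in_segment by blast
  then have "t = (1 - u) * p + u * s" using line_comb[of u a p d s] line_inj[OF d] by metis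
  moreover have "(1 - u) * p + u * s - p = u * (s - p)" by (simp add: algebra_simps)
  moreover have "s - ((1 - u) * p + u * s) = (1 - u) * (s - p)" by (simp add: algebra_simps)
  moreover have "u * (s - p) \<ge> 0" "(1 - u) * (s - p) \<ge> 0" using u ps by auto
  ultimately show "p \<le> t \<and> t \<le> s" by linarith
next
  assume t: "p \<le> t \<and> t \<le> s"
  show "a + t *\<^sub>R d \<in> closed_segment (a + p *\<^sub>R d) (a + s *\<^sub>R d)"
  proof (cases "p = s")
    case True
    then have "t = p" using t by simp
    then show ?thesis by simp
  next
    case False
    then have sp: "s - p > 0" using ps by simp
    define u where "u = (t - p) / (s - p)"
    have u: "0 \<le> u" "u \<le> 1" using t sp unfolding u_def by (auto simp: divide_simps)
    have "(1 - u) * p + u * s = p + u * (s - p)" by (simp add: algebra_simps)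
    also have "\<dots> = t" using sp unfolding u_def by simp
    finally have "a + t *\<^sub>R d = (1 - u) *\<^sub>R (a + p *\<^sub>R d) + u *\<^sub>R (a + s *\<^sub>R d)"
      using line_comb[of u a p d s] by simp
    then show ?thesis unfolding in_segment using u by blast
  qed
qed

lemma Co_sub: "A \<in> Co X \<Longrightarrow> A \<subseteq> X"
  unfolding Co_def by auto

lemma Co_compact_sub: "Co_compact X \<subseteq> Co X"
  unfolding Co_compact_def Co_def using convex_convex_hull by blast

lemma Union_chain_Co:
  assumes sub: "\<A> \<subseteq> Co X" and ch: "\<And>A B. A \<in> \<A> \<Longrightarrow> B \<in> \<A> \<Longrightarrow> A \<subseteq> B \<or> B \<subseteq> A"
  shows "\<Union>\<A> \<in> Co X"
proof -
  define C where "C = \<Union>((\<lambda>A. convex hull A) ` \<A>)"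
  have cvx: "convex C"
    unfolding convex_def
  proof (intro allI impI ballI)
    fix x y and u v :: real
    assume x: "x \<in> C" and y: "y \<in> C" and uv: "0 \<le> u" "0 \<le> v" "u + v = 1"
    obtain A where A: "A \<in> \<A>" "x \<in> convex hull A" using x C_def by auto
    obtain B where B: "B \<in> \<A>" "y \<in> convex hull B" using y C_def by auto
    show "u *\<^sub>R x + v *\<^sub>R y \<in> C"
    proof (cases "A \<subseteq> B")
      case True
      then have "x \<in> convex hull B" using A hull_mono by blast
      then have "u *\<^sub>R x + v *\<^sub>R y \<in> convex hull B"
        using B uv convex_convex_hull unfolding convex_def by blast
      then show ?thesis using B C_def by auto
    next
      case False
      then have "B \<subseteq> A" using ch A B by blast
      then have "y \<in> convex hull A" using B hull_mono by blast
      then have "u *\<^sub>R x + v *\<^sub>R y \<in> convex hull A"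
        using A uv convex_convex_hull unfolding convex_def by blast
      then show ?thesis using A C_def by auto
    qed
  qed
  have "C \<inter> X = \<Union>\<A>"
  proof
    show "\<Union>\<A> \<subseteq> C \<inter> X" using sub Co_sub hull_subset unfolding C_def by fastforce
    show "C \<inter> X \<subseteq> \<Union>\<A>"
    proof
      fix x assume "x \<in> C \<inter> X"
      then obtain A where A: "A \<in> \<A>" "x \<in> convex hull A" "x \<in> X" unfolding C_def by auto
      obtain C' where C': "convex C'" "A = C' \<inter> X" using sub A unfolding Co_def by blast
      have "convex hull A \<subseteq> C'" using C' by (simp add: hull_minimal)
      then show "x \<in> \<Union>\<A>" using A C' by blast
    qed
  qed
  then show ?thesis using cvx unfolding Co_def by blast
qed


lemma top_cantor: "topspace (cantor_cube X) = (\<Pi>\<^sub>E i\<in>X. (UNIV::bool set))"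
  unfolding cantor_cube_def by simp

lemma char_on_top: "char_on X A \<in> topspace (cantor_cube X)"
  unfolding top_cantor char_on_def by auto

lemma char_on_app: "x \<in> X \<Longrightarrow> char_on X A x = (x \<in> A)"
  unfolding char_on_def by simp

lemma char_on_inj: "A \<subseteq> X \<Longrightarrow> B \<subseteq> X \<Longrightarrow> char_on X A = char_on X B \<Longrightarrow> A = B"
  unfolding char_on_def by (metis (mono_tags, lifting) restrict_apply' subset_antisym subset_eq)

lemma top_fam: "topspace (family_topology X F) = char_on X ` F"
  unfolding family_topology_def using char_on_top by auto

lemma open_fin:
  assumes "openin (cantor_cube X) U" "g \<in> U"
  shows "\<exists>G. finite G \<and> G \<subseteq> X \<and> (\<forall>h\<in>topspace (cantor_cube X). (\<forall>x\<in>G. h x = g x) \<longrightarrow> h \<in> U)"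
proof -
  obtain V where V: "finite {i \<in> X. V i \<noteq> topspace (discrete_topology (UNIV::bool set))}"
    "g \<in> Pi\<^sub>E X V" "Pi\<^sub>E X V \<subseteq> U"
    using assms unfolding cantor_cube_def openin_product_topology_alt by blast
  define G where "G = {i \<in> X. V i \<noteq> UNIV}"
  have "finite G" "G \<subseteq> X" using V(1) unfolding G_def by auto
  moreover have "h \<in> U" if h: "h \<in> topspace (cantor_cube X)" "\<forall>x\<in>G. h x = g x" for h
  proof -
    have "h \<in> Pi\<^sub>E X V"
    proof (rule PiE_I)
      fix x assume x: "x \<in> X"
      show "h x \<in> V x"
      proof (cases "x \<in> G")
        case True then show ?thesis using h V(2) x by (auto simp: PiE_iff)
      next
        case False then show ?thesis using x unfolding G_def by auto
      qed
    next
      fix x assume "x \<notin> X" then show "h x = undefined" using h(1) unfolding top_cantor PiE_def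
        by (metis (no_types, lifting) IntD2 mem_Collect_eq extensional_arb)
    qed
    then show ?thesis using V(3) by blast
  qed
  ultimately show ?thesis by blast
qed

lemma basic_open:
  assumes "finite G" "G \<subseteq> X"
  shows "openin (cantor_cube X) {h \<in> topspace (cantor_cube X). \<forall>x\<in>G. h x = c x}"
proof -
  define V where "V i = (if i \<in> G then {c i} else (UNIV::bool set))" for i
  have "openin (product_topology (\<lambda>_. discrete_topology (UNIV::bool set)) X) (\<Pi>\<^sub>E i\<in>X. V i)"
  proof (rule product_topology_basis)
    show "\<And>i. openin (discrete_topology UNIV) (V i)" by simp
    have "{i. V i \<noteq> topspace (discrete_topology UNIV)} \<subseteq> G" unfolding V_def by auto
    then show "finite {i. V i \<noteq> topspace (discrete_topology UNIV)}" using assms finite_subset by blast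
  qed
  moreover have "(\<Pi>\<^sub>E i\<in>X. V i) = {h \<in> topspace (cantor_cube X). \<forall>x\<in>G. h x = c x}"
  proof (intro set_eqI iffI)
    fix h assume h: "h \<in> (\<Pi>\<^sub>E i\<in>X. V i)"
    have "h \<in> topspace (cantor_cube X)" using h unfolding top_cantor PiE_def Pi_def by blast
    moreover have "\<forall>x\<in>G. h x = c x"
    proof
      fix x assume x: "x \<in> G"
      then have "h x \<in> V x" using h assms(2) by (blast dest: PiE_mem)
      then show "h x = c x" using x unfolding V_def by simp
    qed
    ultimately show "h \<in> {h \<in> topspace (cantor_cube X). \<forall>x\<in>G. h x = c x}" by blast
  next
    fix h assume h: "h \<in> {h \<in> topspace (cantor_cube X). \<forall>x\<in>G. h x = c x}"
    show "h \<in> (\<Pi>\<^sub>E i\<in>X. V i)"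
    proof (rule PiE_I)
      fix x assume "x \<in> X" show "h x \<in> V x" using h unfolding V_def by (cases "x \<in> G") auto
    next
      fix x assume "x \<notin> X" then show "h x = undefined" using h unfolding top_cantor PiE_def
        by (metis (no_types, lifting) IntD2 mem_Collect_eq extensional_arb)
    qed
  qed
  ultimately show ?thesis unfolding cantor_cube_def by simp
qed

lemma partA:
  assumes sc: "scattered_space (family_topology X (Co X))"
  shows "order_scattered (Co X)"
proof (rule ccontr)
  assume "\<not> order_scattered (Co X)"
  then obtain f :: "rat \<Rightarrow> 'a set" where rf: "range f \<subseteq> Co X" and sm: "strict_mono f"
    unfolding order_scattered_def by blast
  have fX: "f q \<subseteq> X" for q using rf Co_sub by blast
  have fle: "q \<le> q' \<Longrightarrow> f q \<subseteq> f q'" for q q' using sm by (metis strict_mono_less_eq)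
  have flt: "q < q' \<Longrightarrow> f q \<subset> f q'" for q q' using sm by (simp add: strict_mono_def)
  define U where "U r = \<Union>{f q |q. q < r}" for r
  have UCo: "U r \<in> Co X" for r
    unfolding U_def
  proof (rule Union_chain_Co)
    show "{f q |q. q < r} \<subseteq> Co X" using rf by blast
    fix A B assume "A \<in> {f q |q. q < r}" "B \<in> {f q |q. q < r}"
    then obtain q q' where "A = f q" "B = f q'" by blast
    then show "A \<subseteq> B \<or> B \<subseteq> A" using fle by (metis linear)
  qed
  have UX: "U r \<subseteq> X" for r using UCo Co_sub by blast
  define S where "S = range (\<lambda>r. char_on X (U r))"
  have "S \<subseteq> topspace (family_topology X (Co X))" unfolding top_fam S_def using UCo by blast
  moreover have "S \<noteq> {}" unfolding S_def by blast
  ultimately obtain x W where xS: "x \<in> S" and W: "openin (family_topology X (Co X)) W" "W \<inter> S = {x}"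
    using sc unfolding scattered_space_def by blast
  obtain r where xr: "x = char_on X (U r)" using xS S_def by blast
  obtain W0 where W0: "openin (cantor_cube X) W0" "W = W0 \<inter> char_on X ` Co X"
    using W(1) unfolding family_topology_def openin_subtopology by blast
  have xWS: "x \<in> W \<inter> S" by (simp add: W(2))
  then have "x \<in> W0" using W0(2) by simp
  obtain G where GG: "finite G \<and> G \<subseteq> X \<and> (\<forall>h\<in>topspace (cantor_cube X). (\<forall>y\<in>G. h y = x y) \<longrightarrow> h \<in> W0)"
    using open_fin[OF W0(1) \<open>x \<in> W0\<close>] by (rule exE)
  then have G: "finite G" "G \<subseteq> X"
    and GW: "\<forall>h\<in>topspace (cantor_cube X). (\<forall>y\<in>G. h y = x y) \<longrightarrow> h \<in> W0" by simp_all
  define qq where "qq y = (SOME q. q < r \<and> y \<in> f q)" for y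
  have qq: "qq y < r \<and> y \<in> f (qq y)" if "y \<in> U r" for y
  proof -
    have "\<exists>q. q < r \<and> y \<in> f q" using that unfolding U_def by blast
    then show ?thesis unfolding qq_def by (rule someI_ex)
  qed
  define Qs where "Qs = qq ` (G \<inter> U r)"
  have finQs: "finite Qs" using G unfolding Qs_def by simp
  define q0 where "q0 = (if Qs = {} then r - 1 else Max Qs)"
  have q0r: "q0 < r"
  proof (cases "Qs = {}")
    case False
    then have "Max Qs \<in> Qs" using finQs by simp
    then show ?thesis using qq unfolding q0_def Qs_def using False by auto
  qed (simp add: q0_def)
  have qqle: "qq y \<le> q0" if "y \<in> G \<inter> U r" for y
  proof -
    have "qq y \<in> Qs" "Qs \<noteq> {}" using that unfolding Qs_def by auto
    then show ?thesis unfolding q0_def using finQs by simp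
  qed
  define r1 where "r1 = (q0 + r) / 2"
  have r1: "q0 < r1" "r1 < r" using q0r unfolding r1_def by (auto simp: field_simps)
  define r2 where "r2 = (r1 + r) / 2"
  have r2: "r1 < r2" "r2 < r" using r1 unfolding r2_def by (auto simp: field_simps)
  have sub1: "U r1 \<subseteq> U r" unfolding U_def
  proof (rule Union_mono)
    show "{f q |q. q < r1} \<subseteq> {f q |q. q < r}" using r1(2) by (auto intro: less_trans)
  qed
  have G1: "G \<inter> U r \<subseteq> U r1"
  proof
    fix y assume y: "y \<in> G \<inter> U r"
    have "qq y \<le> q0" using qqle y by blast
    then have "qq y < r1" using r1(1) by simp
    moreover have "y \<in> f (qq y)" using qq y by blast
    ultimately show "y \<in> U r1" unfolding U_def by blast
  qed
  have eqG: "U r1 \<inter> G = U r \<inter> G" using sub1 G1 by blast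
  have "U r1 \<subseteq> f r1" unfolding U_def
  proof (rule Union_least)
    fix A assume "A \<in> {f q |q. q < r1}"
    then obtain q where "A = f q" "q < r1" by blast
    then show "A \<subseteq> f r1" using flt by blast
  qed
  moreover have "f r2 \<subseteq> U r" unfolding U_def using r2(2) by blast
  moreover have "f r1 \<subset> f r2" using flt r2 by simp
  ultimately have neq: "U r1 \<noteq> U r" by blast
  define h where "h = char_on X (U r1)"
  have "\<forall>y\<in>G. h y = x y"
  proof
    fix y assume y: "y \<in> G"
    then have yX: "y \<in> X" using G(2) by blast
    have "(y \<in> U r1) = (y \<in> U r)" using eqG y by blast
    then show "h y = x y" unfolding h_def xr char_on_app[OF yX] .
  qed
  then have "h \<in> W0" using GW char_on_top h_def by blast
  moreover have "h \<in> char_on X ` Co X" using UCo h_def by blast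
  moreover have "h \<in> S" unfolding S_def h_def by blast
  ultimately have "h \<in> W \<inter> S" using W0(2) by simp
  then have "h \<in> {x}" by (simp only: W(2))
  then have "h = x" by simp
  then have "U r1 = U r" using char_on_inj[OF UX UX] unfolding h_def xr by blast
  then show False using neq by simp
qed


lemma partB: "order_scattered (Co X) \<Longrightarrow> order_scattered (Co_compact X)"
  unfolding order_scattered_def using Co_compact_sub by blast

lemma sigma_mono: "strict_mono (\<lambda>q::rat. if 0 \<le> q then q + 1 else 1 / (1 - q))"
  unfolding strict_mono_def
proof (intro allI impI)
  fix x y :: rat assume xy: "x < y"
  show "(if 0 \<le> x then x + 1 else 1 / (1 - x)) < (if 0 \<le> y then y + 1 else 1 / (1 - y))"
  proof (cases "0 \<le> x")
    case True then show ?thesis using xy by simp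
  next
    case False
    then have x: "x < 0" by simp
    have a: "1 / (1 - x) < 1" using x by (simp add: divide_simps)
    show ?thesis
    proof (cases "0 \<le> y")
      case True
      have "1 / (1 - x) < y + 1" using a True by linarith
      then show ?thesis using True False by simp
    next
      case False
      then have "1 - y < 1 - x" "0 < 1 - y" using xy by auto
      then show ?thesis using False \<open>\<not> 0 \<le> x\<close> by (simp add: frac_less2)
    qed
  qed
qed

lemma sigma_pos: "0 < (if 0 \<le> q then q + 1 else 1 / (1 - (q::rat)))"
  by auto

lemma partC:
  fixes X :: "'v::real_vector set" and a d :: 'v
  assumes d: "d \<noteq> 0" and line: "X \<subseteq> {a + t *\<^sub>R d | t. True}"
    and os: "order_scattered (Co_compact X)"
  shows "order_scattered {t::real. a + t *\<^sub>R d \<in> X}"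
proof (rule ccontr)
  assume "\<not> order_scattered {t::real. a + t *\<^sub>R d \<in> X}"
  then obtain g :: "rat \<Rightarrow> real" where rg: "range g \<subseteq> {t. a + t *\<^sub>R d \<in> X}" and sg: "strict_mono g"
    unfolding order_scattered_def by blast
  define \<sigma> where "\<sigma> q = (if 0 \<le> q then q + 1 else 1 / (1 - (q::rat)))" for q
  have s\<sigma>: "strict_mono \<sigma>" unfolding \<sigma>_def by (rule sigma_mono)
  have p\<sigma>: "0 < \<sigma> q" for q unfolding \<sigma>_def by (rule sigma_pos)
  define \<phi> where "\<phi> t = a + t *\<^sub>R d" for t
  define f where "f q = convex hull {\<phi> (g 0), \<phi> (g (\<sigma> q))} \<inter> X" for q
  have gX: "\<phi> (g q) \<in> X" for q using rg unfolding \<phi>_def by auto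
  have g0: "g 0 < g (\<sigma> q)" for q using sg p\<sigma> by (simp add: strict_mono_less)
  have mem: "\<phi> t \<in> f q \<longleftrightarrow> \<phi> t \<in> X \<and> g 0 \<le> t \<and> t \<le> g (\<sigma> q)" for t q
  proof -
    have "\<phi> t \<in> convex hull {\<phi> (g 0), \<phi> (g (\<sigma> q))} \<longleftrightarrow> g 0 \<le> t \<and> t \<le> g (\<sigma> q)"
      unfolding segment_convex_hull[symmetric] \<phi>_def using seg_line[OF d, of "g 0" "g (\<sigma> q)" a t] g0[of q] by simp
    then show ?thesis unfolding f_def by blast
  qed
  have fX: "x \<in> f q \<Longrightarrow> \<exists>t. x = \<phi> t" for x q using line unfolding f_def \<phi>_def by blast
  have "range f \<subseteq> Co_compact X"
  proof
    fix A assume "A \<in> range f"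
    then obtain q where "A = f q" by blast
    then show "A \<in> Co_compact X" unfolding Co_compact_def f_def using gX
      by (intro CollectI exI[of _ "{\<phi> (g 0), \<phi> (g (\<sigma> q))}"]) auto
  qed
  moreover have "strict_mono f"
    unfolding strict_mono_def
  proof (intro allI impI)
    fix q q' :: rat assume qq: "q < q'"
    then have lt: "g (\<sigma> q) < g (\<sigma> q')" using s\<sigma> sg by (simp add: strict_mono_less)
    have "f q \<subseteq> f q'"
    proof
      fix x assume x: "x \<in> f q"
      then obtain t where t: "x = \<phi> t" using fX by blast
      then show "x \<in> f q'" using x mem lt by auto
    qed
    moreover have "\<phi> (g (\<sigma> q')) \<in> f q'" using mem gX g0[of q'] by (simp add: less_imp_le)
    moreover have "\<phi> (g (\<sigma> q')) \<notin> f q" using mem lt by auto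
    ultimately show "f q < f q'" by blast
  qed
  ultimately show False using os unfolding order_scattered_def by blast
qed


lemma not_scattered:
  assumes "\<not> scattered_space T"
  shows "\<exists>S. S \<subseteq> topspace T \<and> S \<noteq> {} \<and> (\<forall>x\<in>S. \<forall>U. openin T U \<longrightarrow> U \<inter> S \<noteq> {x})"
proof -
  have "\<not> (\<forall>S. S \<subseteq> topspace T \<and> S \<noteq> {} \<longrightarrow> (\<exists>x\<in>S. \<exists>U. openin T U \<and> U \<inter> S = {x}))"
    using assms unfolding scattered_space_def .
  then obtain S where "\<not> (S \<subseteq> topspace T \<and> S \<noteq> {} \<longrightarrow> (\<exists>x\<in>S. \<exists>U. openin T U \<and> U \<inter> S = {x}))"
    unfolding not_all by (rule exE)
  then have "S \<subseteq> topspace T \<and> S \<noteq> {} \<and> (\<forall>x\<in>S. \<forall>U. openin T U \<longrightarrow> U \<inter> S \<noteq> {x})"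
    by (simp only: not_imp not_ex Bex_def Ball_def de_Morgan_conj not_not) simp
  then show ?thesis by (rule exI)
qed

lemma partD:
  fixes X :: "'v::real_vector set" and a d :: 'v
  assumes d: "d \<noteq> 0" and line: "X \<subseteq> {a + t *\<^sub>R d | t. True}"
    and os: "order_scattered {t::real. a + t *\<^sub>R d \<in> X}"
  shows "scattered_space (family_topology X (Co X))"
proof (rule ccontr)
  assume nsc: "\<not> scattered_space (family_topology X (Co X))"
  obtain S where S0: "S \<subseteq> topspace (family_topology X (Co X)) \<and> S \<noteq> {} \<and>
      (\<forall>x\<in>S. \<forall>U. openin (family_topology X (Co X)) U \<longrightarrow> U \<inter> S \<noteq> {x})"
    using not_scattered[OF nsc] by (rule exE)
  then have S: "S \<subseteq> topspace (family_topology X (Co X))" "S \<noteq> {}"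
    and noiso: "\<And>x U. x \<in> S \<Longrightarrow> openin (family_topology X (Co X)) U \<Longrightarrow> U \<inter> S \<noteq> {x}"
    by simp_all
  define \<phi> where "\<phi> t = a + t *\<^sub>R d" for t
  define T where "T = {t::real. \<phi> t \<in> X}"
  have Xphi: "x \<in> X \<Longrightarrow> \<exists>t. x = \<phi> t" for x using line unfolding \<phi>_def by blast
  have phi_inj: "\<phi> s = \<phi> t \<Longrightarrow> s = t" for s t using d unfolding \<phi>_def by simp
  define SS where "SS = {A\<in>Co X. char_on X A \<in> S}"
  have perf: "\<exists>B\<in>SS. B \<noteq> A \<and> B \<inter> G = A \<inter> G" if A: "A \<in> SS" and G: "finite G" for A G
  proof -
    have AX: "A \<subseteq> X" using A Co_sub unfolding SS_def by blast
    define W0 where "W0 = {h \<in> topspace (cantor_cube X). \<forall>x\<in>G \<inter> X. h x = char_on X A x}"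
    have oW0: "openin (cantor_cube X) W0" unfolding W0_def by (rule basic_open) (use G in auto)
    define W where "W = W0 \<inter> char_on X ` Co X"
    have oW: "openin (family_topology X (Co X)) W"
      unfolding family_topology_def openin_subtopology W_def by (rule exI[of _ W0]) (simp add: oW0)
    have cA: "char_on X A \<in> W \<inter> S"
      using A char_on_top unfolding W_def W0_def SS_def by auto
    have cAS: "char_on X A \<in> S" using cA by simp
    have ne: "W \<inter> S \<noteq> {char_on X A}" by (rule noiso[OF cAS oW])
    have "\<exists>h\<in>W \<inter> S. h \<noteq> char_on X A"
    proof (rule ccontr)
      assume "\<not> (\<exists>h\<in>W \<inter> S. h \<noteq> char_on X A)"
      then have "W \<inter> S \<subseteq> {char_on X A}" by auto
      then have "W \<inter> S = {char_on X A}" using cA by auto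
      then show False using ne by simp
    qed
    then obtain h where h: "h \<in> W \<inter> S" "h \<noteq> char_on X A" by (rule bexE) simp
    then obtain B where B: "B \<in> Co X" "h = char_on X B" unfolding W_def by blast
    have BSS: "B \<in> SS" using B h unfolding SS_def by blast
    have BX: "B \<subseteq> X" using B Co_sub by blast
    have "B \<noteq> A" using h(2) B(2) by auto
    moreover have "B \<inter> G = A \<inter> G"
    proof (intro set_eqI)
      fix y
      show "y \<in> B \<inter> G \<longleftrightarrow> y \<in> A \<inter> G"
      proof (cases "y \<in> G \<and> y \<in> X")
        case True
        have hW0: "h \<in> W0" using h(1) unfolding W_def by simp
        have "\<forall>x\<in>G \<inter> X. h x = char_on X A x" using hW0 unfolding W0_def mem_Collect_eq by (rule conjunct2)
        then have "h y = char_on X A y" using True by simp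
        moreover have "h y = (y \<in> B)" using True B(2) char_on_app[of y X B] by simp
        moreover have "char_on X A y = (y \<in> A)" using True char_on_app[of y X A] by simp
        ultimately have "(y \<in> B) = (y \<in> A)" by simp
        then show ?thesis using True by simp
      next
        case False
        then have "y \<notin> B \<inter> G" "y \<notin> A \<inter> G" using AX BX by auto
        then show ?thesis by blast
      qed
    qed
    ultimately show ?thesis using BSS by (intro bexI[of _ B]) simp_all
  qed
  define pre where "pre A = {t. \<phi> t \<in> A}" for A
  have pre_inj: "A \<subseteq> X \<Longrightarrow> B \<subseteq> X \<Longrightarrow> pre A = pre B \<Longrightarrow> A = B" for A B
  proof -
    assume AB: "A \<subseteq> X" "B \<subseteq> X" "pre A = pre B"
    show "A = B"
    proof (intro set_eqI iffI)
      fix x assume "x \<in> A"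
      then obtain t where t: "x = \<phi> t" using Xphi AB by blast
      then have "t \<in> pre A" using \<open>x \<in> A\<close> unfolding pre_def by simp
      then have "t \<in> pre B" using AB(3) by simp
      then show "x \<in> B" using t unfolding pre_def by simp
    next
      fix x assume "x \<in> B"
      then obtain t where t: "x = \<phi> t" using Xphi AB by blast
      then have "t \<in> pre B" using \<open>x \<in> B\<close> unfolding pre_def by simp
      then have "t \<in> pre A" using AB(3) by simp
      then show "x \<in> A" using t unfolding pre_def by simp
    qed
  qed
  define P where "P = pre ` SS"
  have SSX: "A \<in> SS \<Longrightarrow> A \<subseteq> X" for A using Co_sub unfolding SS_def by blast
  have "P \<noteq> {}"
  proof -
    obtain x where "x \<in> S" using S by blast
    then obtain A where "A \<in> Co X" "x = char_on X A" using S(1) unfolding top_fam by blast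
    then have "A \<in> SS" using \<open>x \<in> S\<close> unfolding SS_def by blast
    then show ?thesis unfolding P_def by blast
  qed
  moreover have "pf P"
    unfolding pf_def
  proof (intro ballI allI impI)
    fix A' G assume A': "A' \<in> P" and G: "finite (G::real set)"
    from A' obtain A where A: "A' = pre A" "A \<in> SS" unfolding P_def by (rule imageE)
    have fG: "finite (\<phi> ` G)" by (rule finite_imageI[OF G])
    from perf[OF A(2) fG] obtain B where B1: "B \<in> SS" and B2: "B \<noteq> A \<and> B \<inter> \<phi> ` G = A \<inter> \<phi> ` G"
      by (rule bexE)
    note B = B1 conjunct1[OF B2] conjunct2[OF B2]
    have "pre B \<noteq> pre A"
    proof
      assume "pre B = pre A"
      then have "B = A" by (rule pre_inj[OF SSX[OF B(1)] SSX[OF A(2)]])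
      then show False using B(2) by simp
    qed
    moreover have "pre B \<inter> G = pre A \<inter> G"
    proof (intro set_eqI iffI)
      fix t assume "t \<in> pre B \<inter> G"
      then have h1: "\<phi> t \<in> B \<inter> \<phi> ` G" and tG: "t \<in> G" unfolding pre_def by auto
      have "\<phi> t \<in> A \<inter> \<phi> ` G" using h1 unfolding B(3) .
      then show "t \<in> pre A \<inter> G" using tG unfolding pre_def by simp
    next
      fix t assume "t \<in> pre A \<inter> G"
      then have h1: "\<phi> t \<in> A \<inter> \<phi> ` G" and tG: "t \<in> G" unfolding pre_def by auto
      have "\<phi> t \<in> B \<inter> \<phi> ` G" using h1 unfolding B(3) .
      then show "t \<in> pre B \<inter> G" using tG unfolding pre_def by simp
    qed
    moreover have "pre B \<in> P" using B unfolding P_def by blast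
    ultimately show "\<exists>B'\<in>P. B' \<noteq> A' \<and> B' \<inter> G = A' \<inter> G" using A(1) by (intro bexI[of _ "pre B"]) simp_all
  qed
  moreover have "\<forall>A'\<in>P. tconv T A'"
  proof
    fix A' assume "A' \<in> P"
    then obtain A where A: "A \<in> SS" "A' = pre A" unfolding P_def by blast
    obtain C where C: "convex C" "A = C \<inter> X" using A unfolding SS_def Co_def by blast
    show "tconv T A'"
      unfolding tconv_def
    proof (intro conjI ballI impI)
      show "A' \<subseteq> T" using A C unfolding pre_def T_def by auto
      fix x z y assume x: "x \<in> A'" and z: "z \<in> A'" and y: "y \<in> T" and xyz: "x \<le> y \<and> y \<le> z"
      have "\<phi> x \<in> C" "\<phi> z \<in> C" using x z A C unfolding pre_def by auto
      then have "closed_segment (\<phi> x) (\<phi> z) \<subseteq> C" using C(1) by (rule closed_segment_subset)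
      moreover have "\<phi> y \<in> closed_segment (\<phi> x) (\<phi> z)"
        unfolding \<phi>_def using seg_line[OF d, of x z a y] xyz by simp
      ultimately have "\<phi> y \<in> C" by blast
      then show "y \<in> A'" using y A C unfolding T_def pre_def by auto
    qed
  qed
  ultimately have "\<exists>f::rat \<Rightarrow> real. range f \<subseteq> T \<and> strict_mono f"
    by (rule perfect_intervals)
  moreover have "T = {t::real. a + t *\<^sub>R d \<in> X}" unfolding T_def \<phi>_def by simp
  ultimately have "\<not> order_scattered {t::real. a + t *\<^sub>R d \<in> X}" unfolding order_scattered_def by simp
  then show False using os by contradiction
qed

theorem proposition5p5:
  fixes X :: "'v::real_vector set" and a d :: 'v
  assumes "d \<noteq> 0"
    and "X \<subseteq> {a + t *\<^sub>R d | t. True}"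
  shows "(scattered_space (family_topology X (Co X)) \<longleftrightarrow> order_scattered (Co X))
       \<and> (order_scattered (Co X) \<longleftrightarrow> order_scattered (Co_compact X))
       \<and> (order_scattered (Co_compact X) \<longleftrightarrow> order_scattered {t::real. a + t *\<^sub>R d \<in> X})"
proof -
  have A: "scattered_space (family_topology X (Co X)) \<Longrightarrow> order_scattered (Co X)" by (rule partA)
  have B: "order_scattered (Co X) \<Longrightarrow> order_scattered (Co_compact X)" by (rule partB)
  have C: "order_scattered (Co_compact X) \<Longrightarrow> order_scattered {t::real. a + t *\<^sub>R d \<in> X}"
    by (rule partC[OF assms])
  have D: "order_scattered {t::real. a + t *\<^sub>R d \<in> X} \<Longrightarrow> scattered_space (family_topology X (Co X))"
    by (rule partD[OF assms])
  show ?thesis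
  proof (intro conjI iffI)
    assume "scattered_space (family_topology X (Co X))" then show "order_scattered (Co X)" by (rule A)
  next
    assume "order_scattered (Co X)" then show "scattered_space (family_topology X (Co X))" by (intro D C B)
  next
    assume "order_scattered (Co X)" then show "order_scattered (Co_compact X)" by (rule B)
  next
    assume "order_scattered (Co_compact X)" then show "order_scattered (Co X)" by (intro A D C)
  next
    assume "order_scattered (Co_compact X)" then show "order_scattered {t::real. a + t *\<^sub>R d \<in> X}" by (rule C)
  next
    assume "order_scattered {t::real. a + t *\<^sub>R d \<in> X}" then show "order_scattered (Co_compact X)" by (intro B A D)
  qed
qed


end
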